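(* Let $s\ge r$ be positive integers and let $Q$ be drawn from the uniform (Haar) measure on $V_r(\mathbb{R}^s)$. Then for any sets $S,U\subseteq[s]$ and $T,V\subseteq[r]$ with $|S|=|T|=i$ and $|U|=|V|=\ell$, \[ \mathbb{E}_Q\big[[Q]_{S,T}[Q]_{U,V}\big]=\frac{1}{\binom{s}{i}}\,\mathbf{1}[S=U]\,\mathbf{1}[T=V]. \]
   Context: $V_r(\mathbb{R}^s)$ (the Stiefel manifold) is the set of real $s\times r$ matrices with orthonormal columns, with its uniform (Haar) probability measure, invariant under left multiplication by $s\times s$ orthogonal matrices and right multiplication by $r\times r$ orthogonal matrices. For a matrix $C$ and index sets $S,T$ with $|S|=|T|$, $[C]_{S,T}=\det(\{C_{ij}\}_{i\in S,j\in T})$ is the $(S,T)$-minor. $[N]=\{1,\dots,N\}$. *)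

theory Defs
  imports "HOL-Probability.Probability"
begin

text \<open>Index types carry a linear order so that minors can be
  taken with rows/columns in increasing order, as for [N] = {1..N}.\<close>

definition stiefel :: "(real^'c^'r) set" where
  "stiefel = {Q. transpose Q ** Q = mat 1}"

definition minor :: "real^('c::{finite,linorder})^('r::{finite,linorder}) \<Rightarrow> 'r set \<Rightarrow> 'c set \<Rightarrow> real" where
  "minor A S T =
     (let k = card S; xs = sorted_list_of_set S; ys = sorted_list_of_set T in
      \<Sum>p | p permutes {..<k}. of_int (sign p) * (\<Prod>i<k. A $ (xs ! i) $ (ys ! (p i))))"

text \<open>Uniform (Haar) probability measure on the Stiefel manifold: a Borel probability
  measure concentrated on the Stiefel set, invariant under left multiplication by
  orthogonal s x s and right multiplication by orthogonal r x r matrices.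
  (Such a measure exists and is unique.)\<close>
definition stiefel_haar :: "(real^('c::finite)^('r::finite)) measure \<Rightarrow> bool" where
  "stiefel_haar M \<longleftrightarrow>
     prob_space M \<and> sets M = sets borel \<and> (AE Q in M. Q \<in> stiefel) \<and>
     (\<forall>W::real^'r^'r. orthogonal_matrix W \<longrightarrow> distr M M (\<lambda>Q. W ** Q) = M) \<and>
     (\<forall>R::real^'c^'c. orthogonal_matrix R \<longrightarrow> distr M M (\<lambda>Q. Q ** R) = M)"

end

theory Submission
  imports Defs "HOL-Probability.Probability"
begin


definition detf :: "nat \<Rightarrow> (nat \<Rightarrow> nat \<Rightarrow> real) \<Rightarrow> real" where
  "detf k B = (\<Sum>p | p permutes {..<k}. of_int (sign p) * (\<Prod>i<k. B i (p i)))"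

lemma detf_cong:
  assumes "\<And>i j. i < k \<Longrightarrow> j < k \<Longrightarrow> B i j = B' i j"
  shows "detf k B = detf k B'"
  unfolding detf_def
proof (rule sum.cong[OF refl])
  fix p assume "p \<in> {p. p permutes {..<k}}"
  then have "p permutes {..<k}" by simp
  then have "\<And>i. i < k \<Longrightarrow> p i < k" using permutes_in_image by fastforce
  then show "of_int (sign p) * (\<Prod>i<k. B i (p i)) = of_int (sign p) * (\<Prod>i<k. B' i (p i))"
    using assms by (metis (no_types, lifting) lessThan_iff prod.cong)
qed

lemma detf_id: "detf k (\<lambda>i j. if i = j then 1 else 0) = 1"
proof -
  have "detf k (\<lambda>i j. if i = j then 1 else 0) =
      (\<Sum>p\<in>{p. p permutes {..<k}}. if p = id then 1 else 0)"
    unfolding detf_def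
  proof (rule sum.cong[OF refl])
    fix p assume "p \<in> {p. p permutes {..<k}}"
    then have pp: "p permutes {..<k}" by simp
    show "of_int (sign p) * (\<Prod>i<k. if i = p i then 1 else 0) = (if p = id then 1 else (0::real))"
    proof (cases "p = id")
      case True then show ?thesis by (simp add: sign_id)
    next
      case False
      then obtain x where "p x \<noteq> x" by (auto simp: fun_eq_iff)
      then have "x < k" using pp unfolding permutes_def by auto
      then have "(\<Prod>i<k. if i = p i then 1 else (0::real)) = 0"
        using \<open>p x \<noteq> x\<close> by (intro prod_zero) (auto intro!: bexI[of _ x])
      then show ?thesis using False by simp
    qed
  qed
  also have "\<dots> = 1" using sum.delta[OF finite_permutations[OF finite_lessThan[of k]], of id "\<lambda>_. 1::real"] by (simp add: permutes_id)
  finally show ?thesis .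
qed

lemma detf_permute_rows:
  assumes t: "t permutes {..<k}"
  shows "detf k (\<lambda>i j. B (t i) j) = of_int (sign t) * detf k B"
proof -
  have pt: "permutation t" using t by (metis finite_lessThan permutation_permutes)
  have "detf k (\<lambda>i j. B (t i) j) = (\<Sum>p | p permutes {..<k}. of_int (sign p) * (\<Prod>i<k. B (t i) (p i)))"
    unfolding detf_def ..
  also have "\<dots> = (\<Sum>q | q permutes {..<k}. of_int (sign (q \<circ> t)) * (\<Prod>i<k. B (t i) ((q \<circ> t) i)))"
    by (rule sum_permutations_compose_right[OF t])
  also have "\<dots> = (\<Sum>q | q permutes {..<k}. of_int (sign t) * (of_int (sign q) * (\<Prod>i<k. B i (q i))))"
  proof (rule sum.cong[OF refl])
    fix q assume "q \<in> {q. q permutes {..<k}}"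
    then have q: "q permutes {..<k}" by simp
    have "(\<Prod>i<k. B (t i) ((q \<circ> t) i)) = (\<Prod>i<k. (\<lambda>m. B m (q m)) (t i))" by simp
    also have "\<dots> = (\<Prod>i<k. B i (q i))"
      using prod.permute[OF t, of "\<lambda>m. B m (q m)"] by (simp add: comp_def)
    finally have pe: "(\<Prod>i<k. B (t i) ((q \<circ> t) i)) = (\<Prod>i<k. B i (q i))" .
    show "of_int (sign (q \<circ> t)) * (\<Prod>i<k. B (t i) ((q \<circ> t) i)) = of_int (sign t) * (of_int (sign q) * (\<Prod>i<k. B i (q i)))"
      proof -
      have pq: "permutation q" using q by (metis finite_lessThan permutation_permutes)
      have "sign (q \<circ> t) = sign q * sign t" by (rule sign_compose[OF pq pt])
      then show ?thesis using pe by simp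
    qed
  qed
  also have "\<dots> = of_int (sign t) * detf k B"
    unfolding detf_def by (simp add: sum_distrib_left)
  finally show ?thesis .
qed

lemma detf_transpose:
  "(\<Sum>p | p permutes {..<k}. of_int (sign p) * (\<Prod>i<k. B (p i) i)) = detf k B"
proof -
  have "(\<Sum>p | p permutes {..<k}. of_int (sign p) * (\<Prod>i<k. B (p i) i)) =
        (\<Sum>p | p permutes {..<k}. of_int (sign (inv p)) * (\<Prod>i<k. B (inv p i) i))"
    by (rule sum_permutations_inverse)
  also have "\<dots> = detf k B" unfolding detf_def
  proof (rule sum.cong[OF refl])
    fix p assume "p \<in> {p. p permutes {..<k}}"
    then have p: "p permutes {..<k}" by simp
    have "(\<Prod>i<k. B (inv p i) i) = (\<Prod>i<k. B i (p i))"
      using prod.permutes_inv[OF p, of "\<lambda>a b. B b a"] by simp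
    then show "of_int (sign (inv p)) * (\<Prod>i<k. B (inv p i) i) = of_int (sign p) * (\<Prod>i<k. B i (p i))"
      using p sign_inverse[of p] by (metis finite_lessThan permutation_permutes)
  qed
  finally show ?thesis .
qed

lemma detf_identical_rows:
  assumes a: "a < k" and b: "b < k" and ab: "a \<noteq> b" and eq: "\<And>j. B a j = B b j"
  shows "detf k B = 0"
proof -
  let ?t = "Transposition.transpose a b"
  have t: "?t permutes {..<k}" using a b by (simp add: permutes_swap_id)
  have "detf k B = (\<Sum>q | q permutes {..<k}. of_int (sign (q \<circ> ?t)) * (\<Prod>i<k. B i ((q \<circ> ?t) i)))"
    unfolding detf_def by (rule sum_permutations_compose_right[OF t])
  also have "\<dots> = (\<Sum>q | q permutes {..<k}. - (of_int (sign q) * (\<Prod>i<k. B i (q i))))"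
  proof (rule sum.cong[OF refl])
    fix q assume "q \<in> {q. q permutes {..<k}}"
    then have q: "q permutes {..<k}" by simp
    have Bt: "B (?t i) = B i" for i using eq by (cases "i = a"; cases "i = b") (auto simp: fun_eq_iff)
    have "(\<Prod>i<k. B i ((q \<circ> ?t) i)) = (\<Prod>i<k. (\<lambda>m. B m (q m)) (?t i))"
      by (simp add: Bt)
    also have "\<dots> = (\<Prod>i<k. B i (q i))"
      using prod.permute[OF t, of "\<lambda>m. B m (q m)"] by (simp add: comp_def)
    finally have pe: "(\<Prod>i<k. B i ((q \<circ> ?t) i)) = (\<Prod>i<k. B i (q i))" .
    show "of_int (sign (q \<circ> ?t)) * (\<Prod>i<k. B i ((q \<circ> ?t) i)) = - (of_int (sign q) * (\<Prod>i<k. B i (q i)))"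
      proof -
      have pq: "permutation q" using q by (metis finite_lessThan permutation_permutes)
      have "sign (q \<circ> ?t) = sign q * sign ?t" by (rule sign_compose[OF pq permutation_swap_id])
      moreover have "sign ?t = -1" using ab by (simp add: sign_swap_id)
      ultimately show ?thesis using pe by simp
    qed
  qed
  also have "\<dots> = - detf k B" unfolding detf_def by (simp add: sum_negf)
  finally show ?thesis by simp
qed


lemma fiber_sum:
  fixes C :: "'a::{finite,linorder} \<Rightarrow> nat \<Rightarrow> real"
  assumes cS: "card S = k"
  defines "xs \<equiv> sorted_list_of_set S"
  shows "(\<Sum>f\<in>{f \<in> {f \<in> Pi\<^sub>E {..<k} (\<lambda>_. UNIV). inj_on f {..<k}}. f ` {..<k} = S}.
            (\<Prod>i<k. C (f i) i) * detf k (\<lambda>i j. C (f i) j))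
         = (detf k (\<lambda>i j. C (xs ! i) j))^2"
proof -
  have fS: "finite S" by simp
  have dxs: "distinct xs" and sxs: "set xs = S" and lxs: "length xs = k"
    using cS by (auto simp: xs_def)
  have bn: "bij_betw ((!) xs) {..<k} S" using bij_betw_nth[OF dxs] lxs sxs by simp
  define g where "g = inv_into {..<k} ((!) xs)"
  have bg: "bij_betw g S {..<k}" unfolding g_def by (rule bij_betw_inv_into[OF bn])
  define Fb where "Fb = {f \<in> {f \<in> Pi\<^sub>E {..<k} (\<lambda>_. UNIV). inj_on f {..<k}}. f ` {..<k} = (S::'a set)}"
  define ft where "ft = (\<lambda>t::nat\<Rightarrow>nat. \<lambda>i. if i < k then xs ! (t i) else undefined)"
  define idx where "idx = (\<lambda>f::nat\<Rightarrow>'a. \<lambda>i. if i < k then g (f i) else i)"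
  let ?h = "\<lambda>f. (\<Prod>i<k. C (f i) i) * detf k (\<lambda>i j. C (f i) j)"
  let ?D = "detf k (\<lambda>i j. C (xs ! i) j)"
  have W1: "idx (ft t) = t \<and> ft t \<in> Fb" if t: "t permutes {..<k}" for t
  proof -
    have tk: "i < k \<Longrightarrow> t i < k" for i using t permutes_in_image by fastforce
    have A: "idx (ft t) = t"
    proof
      fix x show "idx (ft t) x = t x"
      proof (cases "x < k")
        case True then show ?thesis unfolding idx_def ft_def g_def
          using bij_betw_inv_into_left[OF bn] tk by simp
      next
        case False then show ?thesis unfolding idx_def ft_def using t unfolding permutes_def by simp
      qed
    qed
    have bt: "bij_betw t {..<k} {..<k}" using t by (rule permutes_imp_bij)
    have "bij_betw (\<lambda>i. xs ! (t i)) {..<k} S"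
      using bij_betw_trans[OF bt bn] by (simp add: comp_def)
    then have "bij_betw (ft t) {..<k} S"
      by (rule bij_betw_cong[THEN iffD1, rotated]) (simp add: ft_def)
    then have "ft t \<in> Fb" unfolding Fb_def bij_betw_def by (auto simp: ft_def PiE_def extensional_def)
    then show ?thesis using A by simp
  qed
  have W2: "ft (idx f) = f \<and> idx f \<in> {t. t permutes {..<k}}" if "f \<in> Fb" for f
  proof -
    from that have fE: "f \<in> Pi\<^sub>E {..<k} (\<lambda>_. UNIV)" and fi: "inj_on f {..<k}" and fim: "f ` {..<k} = S"
      unfolding Fb_def by auto
    have A: "ft (idx f) = f"
    proof
      fix x show "ft (idx f) x = f x"
      proof (cases "x < k")
        case True then have "f x \<in> S" using fim by auto
        then show ?thesis unfolding idx_def ft_def g_def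
          using bij_betw_inv_into_right[OF bn] True by simp
      next
        case False then show ?thesis unfolding idx_def ft_def using fE by (auto simp: PiE_def extensional_def)
      qed
    qed
    have bf: "bij_betw f {..<k} S" using fi fim by (simp add: bij_betw_def)
    have "bij_betw (\<lambda>i. g (f i)) {..<k} {..<k}"
      using bij_betw_trans[OF bf bg] by (simp add: comp_def)
    then have "bij_betw (idx f) {..<k} {..<k}"
      by (rule bij_betw_cong[THEN iffD1, rotated]) (simp add: idx_def)
    then have "idx f \<in> {t. t permutes {..<k}}"
      by (auto intro!: bij_imp_permutes simp: idx_def split: if_splits)
    then show ?thesis using A by simp
  qed
  have "sum ?h Fb = (\<Sum>t | t permutes {..<k}. ?h (ft t))"
    by (rule sum.reindex_bij_witness[where i = ft and j = idx]) (use W1 W2 in auto)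
  also have "\<dots> = (\<Sum>t | t permutes {..<k}. ?D * (of_int (sign t) * (\<Prod>i<k. C (xs ! (t i)) i)))"
  proof (rule sum.cong[OF refl])
    fix t assume "t \<in> {t. t permutes {..<k}}"
    then have t: "t permutes {..<k}" by simp
    have tk: "i < k \<Longrightarrow> t i < k" for i using t permutes_in_image by fastforce
    have "?h (ft t) = (\<Prod>i<k. C (xs ! (t i)) i) * detf k (\<lambda>i j. C (xs ! (t i)) j)"
      by (auto simp: ft_def intro!: prod.cong detf_cong)
    also have "detf k (\<lambda>i j. C (xs ! (t i)) j) = of_int (sign t) * ?D"
      using detf_permute_rows[OF t, of "\<lambda>i j. C (xs ! i) j"] by simp
    finally show "?h (ft t) = ?D * (of_int (sign t) * (\<Prod>i<k. C (xs ! (t i)) i))" by simp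
  qed
  also have "\<dots> = ?D * ?D"
    using detf_transpose[where k=k and B="\<lambda>i j. C (xs ! i) j"] by (simp add: sum_distrib_left[symmetric])
  finally show ?thesis unfolding Fb_def by (simp add: power2_eq_square)
qed


lemma cauchy_binet_orth:
  fixes C :: "'a::{finite,linorder} \<Rightarrow> nat \<Rightarrow> real"
  assumes orth: "\<And>j j'. j < k \<Longrightarrow> j' < k \<Longrightarrow> (\<Sum>a\<in>UNIV. C a j * C a j') = (if j = j' then 1 else 0)"
  shows "(\<Sum>S | card S = k. (detf k (\<lambda>i j. C (sorted_list_of_set S ! i) j))^2) = 1"
proof -
  define F where "F = Pi\<^sub>E {..<k} (\<lambda>_. UNIV::'a set)"
  define Fi where "Fi = {f \<in> F. inj_on f {..<k}}"
  let ?h = "\<lambda>f. (\<Prod>i<k. C (f i) i) * detf k (\<lambda>i j. C (f i) j)"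
  have fF: "finite F" unfolding F_def by (simp add: finite_PiE)
  have "1 = detf k (\<lambda>i j. if i = j then 1 else 0)" by (simp add: detf_id)
  also have "\<dots> = detf k (\<lambda>i j. \<Sum>a\<in>UNIV. C a i * C a j)"
    by (rule detf_cong) (simp add: orth)
  also have "\<dots> = (\<Sum>p | p permutes {..<k}. of_int (sign p) *
                     (\<Sum>f\<in>F. \<Prod>i<k. C (f i) i * C (f i) (p i)))"
    unfolding detf_def F_def by (simp add: prod_sum_PiE)
  also have "\<dots> = (\<Sum>f\<in>F. \<Sum>p | p permutes {..<k}. of_int (sign p) *
                     (\<Prod>i<k. C (f i) i * C (f i) (p i)))"
    by (simp add: sum_distrib_left sum.swap[of _ F])
  also have "\<dots> = sum ?h F"
    unfolding detf_def by (simp add: prod.distrib sum_distrib_left mult.left_commute)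
  also have "\<dots> = sum ?h Fi"
  proof (rule sum.mono_neutral_right[OF fF])
    show "Fi \<subseteq> F" unfolding Fi_def by auto
    show "\<forall>f\<in>F - Fi. ?h f = 0"
    proof
      fix f assume "f \<in> F - Fi"
      then have "\<not> inj_on f {..<k}" unfolding Fi_def by auto
      then obtain a b where "a < k" "b < k" "a \<noteq> b" "f a = f b" unfolding inj_on_def by auto
      then have "detf k (\<lambda>i j. C (f i) j) = 0" by (intro detf_identical_rows[of a k b]) auto
      then show "?h f = 0" by simp
    qed
  qed
  also have "\<dots> = (\<Sum>S\<in>{S. card S = k}. sum ?h {f \<in> Fi. f ` {..<k} = S})"
    by (rule sum.group[symmetric]) (auto simp: Fi_def card_image finite_subset[OF _ fF])
  also have "\<dots> = (\<Sum>S | card S = k. (detf k (\<lambda>i j. C (sorted_list_of_set S ! i) j))^2)"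
    by (rule sum.cong[OF refl]) (use fiber_sum in \<open>simp add: Fi_def F_def\<close>)
  finally show ?thesis by simp
qed



lemma minor_detf:
  "minor A S T = detf (card S) (\<lambda>i j. A $ (sorted_list_of_set S ! i) $ (sorted_list_of_set T ! j))"
  unfolding minor_def detf_def Let_def by simp

lemma cont_entry: "continuous_on UNIV (\<lambda>Q::real^'c^'r. Q $ a $ b)"
  by (intro continuous_on_component continuous_on_id)

lemma minor_cont: "continuous_on UNIV (\<lambda>Q. minor Q S T)"
  unfolding minor_detf detf_def
  by (intro continuous_intros cont_entry)

lemma minor_meas: "(\<lambda>Q. minor Q S T) \<in> borel_measurable borel"
  by (rule borel_measurable_continuous_onI[OF minor_cont])

lemma stiefel_entry_bound:
  assumes "Q \<in> stiefel" shows "\<bar>Q $ a $ b\<bar> \<le> 1"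
proof -
  have "(transpose Q ** Q) $ b $ b = 1" using assms by (simp add: stiefel_def mat_def)
  then have s: "(\<Sum>x\<in>UNIV. (Q $ x $ b)^2) = 1"
    by (simp add: matrix_matrix_mult_def transpose_def power2_eq_square)
  have "(Q $ a $ b)^2 \<le> (\<Sum>x\<in>UNIV. (Q $ x $ b)^2)"
    by (rule member_le_sum) auto
  then have "(Q $ a $ b)^2 \<le> 1" using s by simp
  then show ?thesis by (simp add: abs_square_le_1)
qed

lemma detf_bound:
  assumes "\<And>i j. i < k \<Longrightarrow> j < k \<Longrightarrow> \<bar>B i j\<bar> \<le> 1"
  shows "\<bar>detf k B\<bar> \<le> fact k"
proof -
  have "\<bar>detf k B\<bar> \<le> (\<Sum>p | p permutes {..<k}. \<bar>of_int (sign p) * (\<Prod>i<k. B i (p i))\<bar>)"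
    unfolding detf_def by (rule sum_abs)
  also have "\<dots> \<le> (\<Sum>p | p permutes {..<k}. (1::real))"
  proof (rule sum_mono)
    fix p assume "p \<in> {p. p permutes {..<k}}"
    then have p: "p permutes {..<k}" by simp
    have tk: "i < k \<Longrightarrow> p i < k" for i using p permutes_in_image by fastforce
    have "\<bar>(\<Prod>i<k. B i (p i))\<bar> = (\<Prod>i<k. \<bar>B i (p i)\<bar>)" by (simp add: abs_prod)
    also have "\<dots> \<le> 1" by (rule prod_le_1) (auto simp: assms tk)
    finally show "\<bar>of_int (sign p) * (\<Prod>i<k. B i (p i))\<bar> \<le> 1"
      by (simp add: abs_mult sign_def)
  qed
  also have "\<dots> = fact k" by (simp add: card_permutations)
  finally show ?thesis .
qed

lemma minor_bound:
  assumes "Q \<in> stiefel" shows "\<bar>minor Q S T\<bar> \<le> fact (card S)"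
  unfolding minor_detf by (rule detf_bound) (rule stiefel_entry_bound[OF assms])

lemma mult_cont: "continuous_on UNIV (\<lambda>Q::real^'c^'r. W ** Q)"
  unfolding matrix_matrix_mult_def
  by (intro continuous_on_vec_lambda continuous_intros cont_entry)

lemma mult_cont2: "continuous_on UNIV (\<lambda>Q::real^'c^'r. Q ** R)"
  unfolding matrix_matrix_mult_def
  by (intro continuous_on_vec_lambda continuous_intros cont_entry)

lemma haar_left:
  fixes M :: "(real^('c::finite)^('r::finite)) measure"
      and f :: "_ \<Rightarrow> real"
  assumes H: "stiefel_haar M" and W: "orthogonal_matrix W" and f: "f \<in> borel_measurable borel"
  shows "(\<integral>Q. f (W ** Q) \<partial>M) = integral\<^sup>L M f"
proof -
  have sM: "sets M = sets borel" using H by (simp add: stiefel_haar_def)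
  have eq: "distr M M (\<lambda>Q. W ** Q) = M" using H W by (simp add: stiefel_haar_def)
  have m: "(\<lambda>Q. W ** Q) \<in> M \<rightarrow>\<^sub>M M"
    using borel_measurable_continuous_onI[OF mult_cont] measurable_cong_sets[OF sM sM] by simp
  have bm: "(borel_measurable M :: (_ \<Rightarrow> real) set) = borel_measurable borel" by (rule measurable_cong_sets[OF sM refl])
  have fm: "f \<in> borel_measurable M" using f bm by simp
  have "integral\<^sup>L M f = integral\<^sup>L (distr M M (\<lambda>Q. W ** Q)) f" by (simp add: eq)
  also have "\<dots> = (\<integral>Q. f (W ** Q) \<partial>M)" by (rule integral_distr[OF m fm])
  finally show ?thesis by simp
qed

lemma haar_right:
  fixes M :: "(real^('c::finite)^('r::finite)) measure"
      and f :: "_ \<Rightarrow> real"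
  assumes H: "stiefel_haar M" and W: "orthogonal_matrix R" and f: "f \<in> borel_measurable borel"
  shows "(\<integral>Q. f (Q ** R) \<partial>M) = integral\<^sup>L M f"
proof -
  have sM: "sets M = sets borel" using H by (simp add: stiefel_haar_def)
  have eq: "distr M M (\<lambda>Q. Q ** R) = M" using H W by (simp add: stiefel_haar_def)
  have m: "(\<lambda>Q. Q ** R) \<in> M \<rightarrow>\<^sub>M M"
    using borel_measurable_continuous_onI[OF mult_cont2] measurable_cong_sets[OF sM sM] by simp
  have bm: "(borel_measurable M :: (_ \<Rightarrow> real) set) = borel_measurable borel" by (rule measurable_cong_sets[OF sM refl])
  have fm: "f \<in> borel_measurable M" using f bm by simp
  have "integral\<^sup>L M f = integral\<^sup>L (distr M M (\<lambda>Q. Q ** R)) f" by (simp add: eq)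
  also have "\<dots> = (\<integral>Q. f (Q ** R) \<partial>M)" by (rule integral_distr[OF m fm])
  finally show ?thesis by simp
qed

lemma haar_integrable:
  fixes M :: "(real^('c::{finite,linorder})^('r::{finite,linorder})) measure"
  assumes H: "stiefel_haar M"
  shows "integrable M (\<lambda>Q. minor Q S T * minor Q U V)"
proof -
  have sM: "sets M = sets borel" using H by (simp add: stiefel_haar_def)
  have ps: "prob_space M" using H by (simp add: stiefel_haar_def)
  then have fin: "finite_measure M" by (simp add: prob_space_def)
  have ae: "AE Q in M. Q \<in> stiefel" using H by (simp add: stiefel_haar_def)
  have "AE Q in M. norm (minor Q S T * minor Q U V) \<le> fact (card S) * fact (card U)"
    using ae
  proof eventually_elim
    case (elim Q)
    show ?case using minor_bound[OF elim, of S T] minor_bound[OF elim, of U V]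
      by (simp add: abs_mult mult_mono)
  qed
  moreover have "(\<lambda>Q. minor Q S T * minor Q U V) \<in> borel_measurable M"
    proof -
    have bm: "(borel_measurable M :: (_ \<Rightarrow> real) set) = borel_measurable borel" by (rule measurable_cong_sets[OF sM refl])
    show ?thesis using borel_measurable_times[OF minor_meas minor_meas] bm by simp
  qed
  ultimately show ?thesis by (rule finite_measure.integrable_const_bound[OF fin])
qed


definition diagm :: "('n::finite \<Rightarrow> real) \<Rightarrow> real^'n^'n" where
  "diagm d = (\<chi> i j. if i = j then d i else 0)"

lemma diagm_left: "(diagm d ** Q) $ a $ c = d a * Q $ a $ c"
  by (simp add: matrix_matrix_mult_def diagm_def if_distrib if_distribR sum.delta cong: if_cong)

lemma diagm_right: "(Q ** diagm e) $ a $ c = Q $ a $ c * e c"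
  by (simp add: matrix_matrix_mult_def diagm_def if_distrib if_distribR sum.delta' cong: if_cong)

lemma diagm_orth:
  assumes "\<And>i. d i * d i = 1" shows "orthogonal_matrix (diagm d)"
  unfolding orthogonal_matrix
proof (simp add: vec_eq_iff, intro allI)
  fix i j
  show "(transpose (diagm d) ** diagm d) $ i $ j = mat 1 $ i $ j"
    by (simp add: diagm_right) (simp add: transpose_def diagm_def mat_def assms)
qed

lemma detf_row_scale: "detf k (\<lambda>i j. c i * B i j) = (\<Prod>i<k. c i) * detf k B"
  unfolding detf_def by (simp add: prod.distrib sum_distrib_left mult_ac)

lemma detf_col_scale: "detf k (\<lambda>i j. B i j * c j) = (\<Prod>j<k. c j) * detf k B"
  unfolding detf_def sum_distrib_left
proof (rule sum.cong[OF refl])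
  fix p assume "p \<in> {p. p permutes {..<k}}"
  then have p: "p permutes {..<k}" by simp
  have "(\<Prod>i<k. c (p i)) = (\<Prod>j<k. c j)"
    using prod.permute[OF p, of c] by (simp add: comp_def)
  then show "of_int (sign p) * (\<Prod>i<k. B i (p i) * c (p i)) =
    (\<Prod>j<k. c j) * (of_int (sign p) * (\<Prod>i<k. B i (p i)))"
    by (simp add: prod.distrib mult_ac)
qed

lemma prod_sorted: "finite S \<Longrightarrow> (\<Prod>i<card S. d (sorted_list_of_set S ! i)) = (\<Prod>x\<in>S. (d x :: real))"
  using prod.reindex_bij_betw[OF bij_betw_nth[of "sorted_list_of_set S" "{..<card S}" S], of d]
  by simp

lemma minor_row_scale:
  fixes Q :: "real^('c::{finite,linorder})^('r::{finite,linorder})"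
  shows "minor (diagm d ** Q) S T = (\<Prod>x\<in>S. d x) * minor Q S T"
  unfolding minor_detf diagm_left detf_row_scale
  by (simp add: prod_sorted)

lemma minor_col_scale:
  fixes Q :: "real^('c::{finite,linorder})^('r::{finite,linorder})"
  assumes "card T = card S"
  shows "minor (Q ** diagm e) S T = (\<Prod>x\<in>T. e x) * minor Q S T"
  unfolding minor_detf diagm_right detf_col_scale
  using prod_sorted[of T e] assms by simp

definition fl :: "'a \<Rightarrow> 'a \<Rightarrow> real" where "fl a = (\<lambda>x. if x = a then -1 else 1)"

lemma fl_sq: "fl a x * fl a x = 1" by (simp add: fl_def)

lemma prod_fl: "finite S \<Longrightarrow> (\<Prod>x\<in>S. fl a x) = (if a \<in> S then -1 else 1)"
proof -
  assume f: "finite S"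
  show ?thesis
  proof (cases "a \<in> S")
    case True
    then have "(\<Prod>x\<in>S. fl a x) = fl a a * (\<Prod>x\<in>S - {a}. fl a x)" using f by (simp add: prod.remove)
    also have "(\<Prod>x\<in>S - {a}. fl a x) = 1" by (rule prod.neutral) (auto simp: fl_def)
    finally show ?thesis using True by (simp add: fl_def)
  next
    case False then have "(\<Prod>x\<in>S. fl a x) = 1" by (intro prod.neutral) (auto simp: fl_def)
    then show ?thesis using False by simp
  qed
qed

lemma haar_zero_left:
  fixes M :: "(real^('c::finite)^('r::finite)) measure" and g :: "_ \<Rightarrow> real"
  assumes H: "stiefel_haar M" and W: "orthogonal_matrix W" and g: "g \<in> borel_measurable borel"
    and neg: "\<And>Q. g (W ** Q) = - g Q"
  shows "integral\<^sup>L M g = 0"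
proof -
  have "integral\<^sup>L M g = (\<integral>Q. g (W ** Q) \<partial>M)" using haar_left[OF H W g] by simp
  also have "\<dots> = - integral\<^sup>L M g" by (simp add: neg)
  finally show ?thesis by simp
qed

lemma haar_zero_right:
  fixes M :: "(real^('c::finite)^('r::finite)) measure" and g :: "_ \<Rightarrow> real"
  assumes H: "stiefel_haar M" and W: "orthogonal_matrix R" and g: "g \<in> borel_measurable borel"
    and neg: "\<And>Q. g (Q ** R) = - g Q"
  shows "integral\<^sup>L M g = 0"
proof -
  have "integral\<^sup>L M g = (\<integral>Q. g (Q ** R) \<partial>M)" using haar_right[OF H W g] by simp
  also have "\<dots> = - integral\<^sup>L M g" by (simp add: neg)
  finally show ?thesis by simp
qed

definition pm :: "('n::finite \<Rightarrow> 'n) \<Rightarrow> real^'n^'n" where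
  "pm \<sigma> = (\<chi> a b. if b = \<sigma> a then 1 else 0)"

lemma pm_left: "(pm \<sigma> ** Q) $ a $ c = Q $ (\<sigma> a) $ c"
  by (simp add: matrix_matrix_mult_def pm_def if_distrib if_distribR sum.delta' cong: if_cong)

lemma pm_orth:
  assumes b: "bij \<sigma>" shows "orthogonal_matrix (pm \<sigma>)"
  unfolding orthogonal_matrix
proof (simp add: vec_eq_iff, intro allI)
  fix i j
  have "(transpose (pm \<sigma>) ** pm \<sigma>) $ i $ j =
     (\<Sum>a\<in>UNIV. (if i = \<sigma> a then 1 else 0) * (if j = \<sigma> a then 1 else (0::real)))"
    by (simp add: matrix_matrix_mult_def transpose_def pm_def)
  also have "\<dots> = (\<Sum>a\<in>UNIV. if a = inv \<sigma> i then (if j = i then 1 else 0) else 0)"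
  proof (rule sum.cong[OF refl])
    fix a
    have "(i = \<sigma> a) = (a = inv \<sigma> i)" using b by (metis bij_inv_eq_iff)
    then show "(if i = \<sigma> a then 1 else 0) * (if j = \<sigma> a then 1 else (0::real)) =
      (if a = inv \<sigma> i then (if j = i then 1 else 0) else 0)" by auto
  qed
  also have "\<dots> = mat 1 $ i $ j" by (simp add: mat_def)
  finally show "(transpose (pm \<sigma>) ** pm \<sigma>) $ i $ j = mat 1 $ i $ j" .
qed


lemma exists_sigma:
  fixes S S' :: "'a::{finite,linorder} set"
  assumes c: "card S' = card S"
  shows "\<exists>\<sigma>. bij \<sigma> \<and> (\<forall>m < card S. \<sigma> (sorted_list_of_set S' ! m) = sorted_list_of_set S ! m)"
proof -
  define k where "k = card S"
  define xs where "xs = sorted_list_of_set S"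
  define xs' where "xs' = sorted_list_of_set S'"
  have bn: "bij_betw ((!) xs) {..<k} S" unfolding xs_def k_def by (rule bij_betw_nth) auto
  have bn': "bij_betw ((!) xs') {..<k} S'" unfolding xs'_def k_def using c by (intro bij_betw_nth) auto
  define f1 where "f1 = (\<lambda>x. xs ! inv_into {..<k} ((!) xs') x)"
  have b1: "bij_betw f1 S' S" unfolding f1_def
    using bij_betw_trans[OF bij_betw_inv_into[OF bn'] bn] by (simp add: comp_def)
  have "card (- S') = card (- S)" using c by (simp add: Compl_eq_Diff_UNIV card_Diff_subset)
  then obtain f2 where b2: "bij_betw f2 (- S') (- S)"
    using finite_same_card_bij[of "- S'" "- S"] by auto
  define \<sigma> where "\<sigma> = (\<lambda>x. if x \<in> S' then f1 x else f2 x)"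
  have b1': "bij_betw \<sigma> S' S" using b1 by (rule bij_betw_cong[THEN iffD1, rotated]) (simp add: \<sigma>_def)
  have b2': "bij_betw \<sigma> (- S') (- S)" using b2 by (rule bij_betw_cong[THEN iffD1, rotated]) (simp add: \<sigma>_def)
  have "bij_betw \<sigma> (S' \<union> - S') (S \<union> - S)" by (rule bij_betw_combine[OF b1' b2']) auto
  then have "bij \<sigma>" by simp
  moreover have "\<forall>m < card S. \<sigma> (xs' ! m) = xs ! m"
  proof (intro allI impI)
    fix m assume m: "m < card S"
    then have "xs' ! m \<in> S'" using bn' k_def bij_betwE by blast
    then show "\<sigma> (xs' ! m) = xs ! m" unfolding \<sigma>_def f1_def
      using bij_betw_inv_into_left[OF bn', of m] m k_def by simp
  qed
  ultimately show ?thesis unfolding xs_def xs'_def by blast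
qed

lemma sq_eq:
  fixes M :: "(real^('r::{finite,linorder})^('s::{finite,linorder})) measure"
  assumes H: "stiefel_haar M" and c: "card S' = card S"
  shows "(\<integral>Q. minor Q S' T * minor Q S' T \<partial>M) = (\<integral>Q. minor Q S T * minor Q S T \<partial>M)"
proof -
  obtain \<sigma> where b: "bij \<sigma>" and sp: "\<forall>m < card S. \<sigma> (sorted_list_of_set S' ! m) = sorted_list_of_set S ! m"
    using exists_sigma[OF c] by blast
  have mm: "minor (pm \<sigma> ** Q) S' T = minor Q S T" for Q
    unfolding minor_detf pm_left c by (rule detf_cong) (simp add: sp)
  have f: "(\<lambda>Q. minor Q S' T * minor Q S' T) \<in> borel_measurable borel"
    by (intro borel_measurable_times minor_meas)
  show ?thesis using haar_left[OF H pm_orth[OF b] f] by (simp add: mm)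
qed

lemma sum_one:
  fixes Q :: "real^('r::{finite,linorder})^('s::{finite,linorder})"
  assumes Q: "Q \<in> stiefel" and cT: "card T = i"
  shows "(\<Sum>S | card S = i. minor Q S T * minor Q S T) = 1"
proof -
  define ys where "ys = sorted_list_of_set T"
  have dys: "distinct ys" and lys: "length ys = i" using cT by (auto simp: ys_def)
  define C where "C = (\<lambda>a j. Q $ a $ (ys ! j))"
  have orth: "(\<Sum>a\<in>UNIV. C a j * C a j') = (if j = j' then 1 else 0)" if "j < i" "j' < i" for j j'
  proof -
    have "(\<Sum>a\<in>UNIV. C a j * C a j') = (transpose Q ** Q) $ (ys ! j) $ (ys ! j')"
      by (simp add: C_def matrix_matrix_mult_def transpose_def)
    also have "\<dots> = (if ys ! j = ys ! j' then 1 else 0)" using Q by (simp add: stiefel_def mat_def)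
    also have "\<dots> = (if j = j' then 1 else 0)" using nth_eq_iff_index_eq[OF dys] that lys by simp
    finally show ?thesis .
  qed
  have "(\<Sum>S | card S = i. (detf i (\<lambda>a j. C (sorted_list_of_set S ! a) j))^2) = 1"
    by (rule cauchy_binet_orth) (rule orth)
  moreover have "(\<Sum>S | card S = i. minor Q S T * minor Q S T) =
       (\<Sum>S | card S = i. (detf i (\<lambda>a j. C (sorted_list_of_set S ! a) j))^2)"
    by (rule sum.cong[OF refl]) (simp add: minor_detf C_def ys_def power2_eq_square)
  ultimately show ?thesis by simp
qed


theorem mainTheorem7:
  fixes M :: "(real^('r::{finite,linorder})^('s::{finite,linorder})) measure"
    and S U :: "'s set" and T V :: "'r set" and i l :: nat
  assumes "CARD('r) \<le> CARD('s)"
    and "stiefel_haar M"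
    and "card S = i" and "card T = i"
    and "card U = l" and "card V = l"
  shows "(\<integral>Q. minor Q S T * minor Q U V \<partial>M) =
           1 / real (CARD('s) choose i) * (if S = U then 1 else 0) * (if T = V then 1 else 0)"
proof -
  note H = assms(2)
  have gm: "(\<lambda>Q. minor Q S T * minor Q U V) \<in> borel_measurable borel"
    by (intro borel_measurable_times minor_meas)
  show ?thesis
  proof (cases "S = U")
    case False
    then obtain a where a: "(a \<in> S \<and> a \<notin> U) \<or> (a \<notin> S \<and> a \<in> U)" by blast
    have "(\<integral>Q. minor Q S T * minor Q U V \<partial>M) = 0"
    proof (rule haar_zero_left[OF H diagm_orth[of "fl a"] gm])
      show "fl a x * fl a x = 1" for x by (rule fl_sq)
      fix Q
      show "minor (diagm (fl a) ** Q) S T * minor (diagm (fl a) ** Q) U V = - (minor Q S T * minor Q U V)"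
        unfolding minor_row_scale using a by (auto simp: prod_fl)
    qed
    then show ?thesis using False by simp
  next
    case SU: True
    show ?thesis
    proof (cases "T = V")
      case False
      then obtain a where a: "(a \<in> T \<and> a \<notin> V) \<or> (a \<notin> T \<and> a \<in> V)" by blast
      have "(\<integral>Q. minor Q S T * minor Q U V \<partial>M) = 0"
      proof (rule haar_zero_right[OF H diagm_orth[of "fl a"] gm])
        show "fl a x * fl a x = 1" for x by (rule fl_sq)
        fix Q
        have c1: "card T = card S" and c2: "card V = card U" using assms by auto
        show "minor (Q ** diagm (fl a)) S T * minor (Q ** diagm (fl a)) U V = - (minor Q S T * minor Q U V)"
          unfolding minor_col_scale[OF c1] minor_col_scale[OF c2] using a by (auto simp: prod_fl)
      qed
      then show ?thesis using False by simp
    next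
      case TV: True
      define c where "c = (\<integral>Q. minor Q S T * minor Q S T \<partial>M)"
      have ps: "prob_space M" using H by (simp add: stiefel_haar_def)
      have sM: "sets M = sets borel" using H by (simp add: stiefel_haar_def)
      have bm: "(borel_measurable M :: (_ \<Rightarrow> real) set) = borel_measurable borel"
        by (rule measurable_cong_sets[OF sM refl])
      have ae: "AE Q in M. Q \<in> stiefel" using H by (simp add: stiefel_haar_def)
      have each: "(\<integral>Q. minor Q S' T * minor Q S' T \<partial>M) = c" if "S' \<in> {S'. card S' = i}" for S'
        unfolding c_def using sq_eq[OF H, of S' S T] that assms(3) by simp
      have "(\<Sum>S'\<in>{S'. card S' = i}. (\<integral>Q. minor Q S' T * minor Q S' T \<partial>M)) =
            (\<integral>Q. (\<Sum>S'\<in>{S'. card S' = i}. minor Q S' T * minor Q S' T) \<partial>M)"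
        using integral_sum[where f="\<lambda>S' Q. minor Q S' T * minor Q S' T" and I="{S'. card S' = i}"] haar_integrable[OF H] by simp
      also have "\<dots> = (\<integral>Q. 1 \<partial>M)"
      proof (rule integral_cong_AE)
        show "(\<lambda>Q. \<Sum>S'\<in>{S'. card S' = i}. minor Q S' T * minor Q S' T) \<in> borel_measurable M"
          using bm by (simp add: borel_measurable_sum borel_measurable_times minor_meas)
        show "(\<lambda>Q. 1::real) \<in> borel_measurable M" by simp
        show "AE Q in M. (\<Sum>S'\<in>{S'. card S' = i}. minor Q S' T * minor Q S' T) = 1"
          using ae by eventually_elim (rule sum_one[OF _ assms(4)])
      qed
      also have "\<dots> = 1" using ps by (simp add: prob_space.prob_space)
      finally have "(\<Sum>S'\<in>{S'::'s set. card S' = i}. c) = 1" using each by simp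
      moreover have "card {S'::'s set. card S' = i} = CARD('s) choose i"
        using n_subsets[of "UNIV::'s set" i] by simp
      ultimately have "real (CARD('s) choose i) * c = 1" by simp
      then have "c = 1 / real (CARD('s) choose i)"
        by (metis mult_eq_0_iff nonzero_eq_divide_eq zero_neq_one mult.commute)
      then show ?thesis using SU TV unfolding c_def by simp
    qed
  qed
qed

end
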